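(* Let $F$ be a hyperfield whose additive hypergroup is superiorly canonical. Then there exists a Krasner valuation $v$ on $F$ whose norm satisfies $\mathrm{ig}(\rho_v)=\{0\}$, and any two Krasner valuations on $F$ with this property are equivalent.
   Context: A canonical hypergroup is a triple $(H,+,0)$ where $H\neq\emptyset$, $+$ assigns to each pair a subset $x+y\subseteq H$ (for sets $A+B:=\bigcup_{a\in A,b\in B}a+b$), $0\in H$, such that $+$ is associative and commutative, each $x$ has a unique $-x$ with $0\in x+(-x)$, and $z\in x+y\Rightarrow y\in z+(-x)$; write $x-y:=x+(-y)$. A hyperfield is $(F,+,\cdot,0,1)$ with $(F,+,0)$ a canonical hypergroup, $(F,\cdot)$ commutative with $0$ absorbing, $x(y+z)=xy+xz$, and $F\setminus\{0\}$ an abelian group with neutral $1\neq 0$. A canonical hypergroup $H$ is superiorly canonical if: (SCH1) $x\in x+y$ implies $x+y=\{x\}$; (SCH2) $(x+y)\cap(z+t)\neq\emptyset$ implies $x+y\subseteq z+t$ or $z+t\subseteq x+y$; (SCH3) for $x\neq y$ and $z,t\in x-y$, $z-z=t-t$; (SCH4) if $x\in z-z$ and $y\notin z-z$ then $x-x\subseteq y-y$. Valuation on $F$: for an ordered abelian group $\Gamma$ and $\infty>\Gamma$ with $\gamma+\infty=\infty+\gamma=\infty$, a surjective map $v:F\to\Gamma\cup\{\infty\}$ with $vx=\infty\iff x=0$, $v(xy)=vx+vy$, $z\in x+y\Rightarrow vz\ge\min\{vx,vy\}$; $vF:=v(F\setminus\{0\})$. Valuations $v_i:F\to\Gamma_i\cup\{\infty\}$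 are equivalent if $v_2=\sigma\circ v_1$ for an order-preserving group isomorphism $\sigma:\Gamma_1\to\Gamma_2$ ($\sigma(\infty)=\infty$). An initial segment of $\Gamma$ is $\rho\subseteq\Gamma$ with $\delta\in\rho,\gamma<\delta\Rightarrow\gamma\in\rho$; $\rho+\gamma:=\{\delta+\gamma:\delta\in\rho\}$; "$\alpha>\rho+\gamma$" means $\alpha\notin\rho+\gamma$; $\mathrm{ig}(\rho):=\{\gamma\in\Gamma:\rho+\gamma=\rho\}$. Krasner valuation: a valuation $v$ on $F$ such that (KVH1) for all $x,y\in F$ with $0\notin x+y$, $v(x+y)$ is a singleton; (KVH2) there is an initial segment $\rho_v$ of $vF$ with $0\in\rho_v$ (the norm) such that for all $x,y,z,t\in F$ with $z\in x+y$: $t\in x+y$ iff $vs>\rho_v+\min\{vx,vy\}$ for all $s\in z-t$. *)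

theory Defs
  imports Main
begin

text \<open>A hyperfield is given on the whole carrier type 'a by a hyperaddition,
a multiplication, a zero and a one.\<close>

definition setadd :: "('a \<Rightarrow> 'a \<Rightarrow> 'a set) \<Rightarrow> 'a set \<Rightarrow> 'a set \<Rightarrow> 'a set" where
  "setadd hadd A B = (\<Union>a\<in>A. \<Union>b\<in>B. hadd a b)"

definition hneg :: "('a \<Rightarrow> 'a \<Rightarrow> 'a set) \<Rightarrow> 'a \<Rightarrow> 'a \<Rightarrow> 'a" where
  "hneg hadd z x = (THE y. z \<in> hadd x y)"

definition hsub :: "('a \<Rightarrow> 'a \<Rightarrow> 'a set) \<Rightarrow> 'a \<Rightarrow> 'a \<Rightarrow> 'a \<Rightarrow> 'a set" where
  "hsub hadd z x y = hadd x (hneg hadd z y)"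

definition canonical_hypergroup :: "('a \<Rightarrow> 'a \<Rightarrow> 'a set) \<Rightarrow> 'a \<Rightarrow> bool" where
  "canonical_hypergroup hadd z \<longleftrightarrow>
     (\<forall>x y w. setadd hadd (hadd x y) {w} = setadd hadd {x} (hadd y w)) \<and>
     (\<forall>x y. hadd x y = hadd y x) \<and>
     (\<forall>x. \<exists>!y. z \<in> hadd x y) \<and>
     (\<forall>x y w. w \<in> hadd x y \<longrightarrow> y \<in> hadd w (hneg hadd z x))"

definition hyperfield ::
  "('a \<Rightarrow> 'a \<Rightarrow> 'a set) \<Rightarrow> ('a \<Rightarrow> 'a \<Rightarrow> 'a) \<Rightarrow> 'a \<Rightarrow> 'a \<Rightarrow> bool" where
  "hyperfield hadd mul z one \<longleftrightarrow>
     canonical_hypergroup hadd z \<and>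
     (\<forall>x y. mul x y = mul y x) \<and>
     (\<forall>x y w. mul (mul x y) w = mul x (mul y w)) \<and>
     (\<forall>x. mul z x = z) \<and>
     (\<forall>x y w. (mul x) ` (hadd y w) = setadd hadd {mul x y} {mul x w}) \<and>
     one \<noteq> z \<and>
     (\<forall>x. mul one x = x) \<and>
     (\<forall>x y. x \<noteq> z \<longrightarrow> y \<noteq> z \<longrightarrow> mul x y \<noteq> z) \<and>
     (\<forall>x. x \<noteq> z \<longrightarrow> (\<exists>y. y \<noteq> z \<and> mul x y = one))"

definition superiorly_canonical :: "('a \<Rightarrow> 'a \<Rightarrow> 'a set) \<Rightarrow> 'a \<Rightarrow> bool" where
  "superiorly_canonical hadd z \<longleftrightarrow>
     canonical_hypergroup hadd z \<and>
     (\<forall>x y. x \<in> hadd x y \<longrightarrow> hadd x y = {x}) \<and>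
     (\<forall>x y u t. hadd x y \<inter> hadd u t \<noteq> {} \<longrightarrow>
                hadd x y \<subseteq> hadd u t \<or> hadd u t \<subseteq> hadd x y) \<and>
     (\<forall>x y u t. x \<noteq> y \<longrightarrow> u \<in> hsub hadd z x y \<longrightarrow> t \<in> hsub hadd z x y \<longrightarrow>
                hsub hadd z u u = hsub hadd z t t) \<and>
     (\<forall>x y u. x \<in> hsub hadd z u u \<longrightarrow> y \<notin> hsub hadd z u u \<longrightarrow>
                hsub hadd z x x \<subseteq> hsub hadd z y y)"

record 'g ogroup =
  gcarrier :: "'g set"
  gplus :: "'g \<Rightarrow> 'g \<Rightarrow> 'g"
  gzero :: 'g
  gle :: "'g \<Rightarrow> 'g \<Rightarrow> bool"

definition ordered_ab_group :: "'g ogroup \<Rightarrow> bool" where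
  "ordered_ab_group G \<longleftrightarrow>
     gzero G \<in> gcarrier G \<and>
     (\<forall>a\<in>gcarrier G. \<forall>b\<in>gcarrier G. gplus G a b \<in> gcarrier G) \<and>
     (\<forall>a\<in>gcarrier G. \<forall>b\<in>gcarrier G. \<forall>c\<in>gcarrier G.
        gplus G (gplus G a b) c = gplus G a (gplus G b c)) \<and>
     (\<forall>a\<in>gcarrier G. \<forall>b\<in>gcarrier G. gplus G a b = gplus G b a) \<and>
     (\<forall>a\<in>gcarrier G. gplus G a (gzero G) = a) \<and>
     (\<forall>a\<in>gcarrier G. \<exists>b\<in>gcarrier G. gplus G a b = gzero G) \<and>
     (\<forall>a\<in>gcarrier G. gle G a a) \<and>
     (\<forall>a\<in>gcarrier G. \<forall>b\<in>gcarrier G. gle G a b \<longrightarrow> gle G b a \<longrightarrow> a = b) \<and>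
     (\<forall>a\<in>gcarrier G. \<forall>b\<in>gcarrier G. \<forall>c\<in>gcarrier G.
        gle G a b \<longrightarrow> gle G b c \<longrightarrow> gle G a c) \<and>
     (\<forall>a\<in>gcarrier G. \<forall>b\<in>gcarrier G. gle G a b \<or> gle G b a) \<and>
     (\<forall>a\<in>gcarrier G. \<forall>b\<in>gcarrier G. \<forall>c\<in>gcarrier G.
        gle G a b \<longrightarrow> gle G (gplus G a c) (gplus G b c))"

definition glt :: "'g ogroup \<Rightarrow> 'g \<Rightarrow> 'g \<Rightarrow> bool" where
  "glt G a b \<longleftrightarrow> gle G a b \<and> a \<noteq> b"

text \<open>Gamma \<union> {\<infinity>} is modelled by 'g option, None = \<infinity>.\<close>

definition ext_le :: "'g ogroup \<Rightarrow> 'g option \<Rightarrow> 'g option \<Rightarrow> bool" where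
  "ext_le G a b = (case b of None \<Rightarrow> True
                   | Some b' \<Rightarrow> (case a of None \<Rightarrow> False | Some a' \<Rightarrow> gle G a' b'))"

definition ext_plus :: "'g ogroup \<Rightarrow> 'g option \<Rightarrow> 'g option \<Rightarrow> 'g option" where
  "ext_plus G a b = (case a of None \<Rightarrow> None
                     | Some a' \<Rightarrow> (case b of None \<Rightarrow> None | Some b' \<Rightarrow> Some (gplus G a' b')))"

definition ext_min :: "'g ogroup \<Rightarrow> 'g option \<Rightarrow> 'g option \<Rightarrow> 'g option" where
  "ext_min G a b = (if ext_le G a b then a else b)"

definition valuation ::
  "('a \<Rightarrow> 'a \<Rightarrow> 'a set) \<Rightarrow> ('a \<Rightarrow> 'a \<Rightarrow> 'a) \<Rightarrow> 'a \<Rightarrow> 'g ogroup \<Rightarrow> ('a \<Rightarrow> 'g option) \<Rightarrow> bool" where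
  "valuation hadd mul z G v \<longleftrightarrow>
     ordered_ab_group G \<and>
     range v = Some ` gcarrier G \<union> {None} \<and>
     (\<forall>x. v x = None \<longleftrightarrow> x = z) \<and>
     (\<forall>x y. v (mul x y) = ext_plus G (v x) (v y)) \<and>
     (\<forall>x y w. w \<in> hadd x y \<longrightarrow> ext_le G (ext_min G (v x) (v y)) (v w))"

definition value_group :: "'a \<Rightarrow> ('a \<Rightarrow> 'g option) \<Rightarrow> 'g set" where
  "value_group z v = {\<gamma>. \<exists>x. x \<noteq> z \<and> v x = Some \<gamma>}"

definition initial_segment :: "'g ogroup \<Rightarrow> 'g set \<Rightarrow> 'g set \<Rightarrow> bool" where
  "initial_segment G S \<rho> \<longleftrightarrow>
     \<rho> \<subseteq> S \<and> (\<forall>\<delta>\<in>\<rho>. \<forall>\<gamma>\<in>S. glt G \<gamma> \<delta> \<longrightarrow> \<gamma> \<in> \<rho>)"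

definition seg_shift :: "'g ogroup \<Rightarrow> 'g set \<Rightarrow> 'g \<Rightarrow> 'g set" where
  "seg_shift G \<rho> \<gamma> = (\<lambda>\<delta>. gplus G \<delta> \<gamma>) ` \<rho>"

definition ig :: "'g ogroup \<Rightarrow> 'g set \<Rightarrow> 'g set" where
  "ig G \<rho> = {\<gamma>\<in>gcarrier G. seg_shift G \<rho> \<gamma> = \<rho>}"

text \<open>In KVH2, min(vx,vy) is taken in \<Gamma>,
  i.e. x, y not both zero; "\<alpha> > \<rho>+\<gamma>" means \<alpha> \<notin> \<rho>+\<gamma>,
  where \<alpha> = \<infinity> is never in \<rho>+\<gamma>.\<close>

definition krasner_valuation ::
  "('a \<Rightarrow> 'a \<Rightarrow> 'a set) \<Rightarrow> ('a \<Rightarrow> 'a \<Rightarrow> 'a) \<Rightarrow> 'a \<Rightarrow> 'g ogroup \<Rightarrow> ('a \<Rightarrow> 'g option)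
    \<Rightarrow> 'g set \<Rightarrow> bool" where
  "krasner_valuation hadd mul z G v \<rho> \<longleftrightarrow>
     valuation hadd mul z G v \<and>
     (\<forall>x y. z \<notin> hadd x y \<longrightarrow> (\<exists>\<alpha>. v ` hadd x y = {\<alpha>})) \<and>
     initial_segment G (value_group z v) \<rho> \<and> gzero G \<in> \<rho> \<and>
     (\<forall>x y w t \<gamma>. w \<in> hadd x y \<longrightarrow> ext_min G (v x) (v y) = Some \<gamma> \<longrightarrow>
        (t \<in> hadd x y \<longleftrightarrow>
           (\<forall>s \<in> hsub hadd z w t. v s \<notin> Some ` seg_shift G \<rho> \<gamma>)))"

definition equivalent_valuations ::
  "'g ogroup \<Rightarrow> ('a \<Rightarrow> 'g option) \<Rightarrow> 'h ogroup \<Rightarrow> ('a \<Rightarrow> 'h option) \<Rightarrow> bool" where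
  "equivalent_valuations G1 v1 G2 v2 \<longleftrightarrow>
     (\<exists>\<sigma>. bij_betw \<sigma> (gcarrier G1) (gcarrier G2) \<and>
        (\<forall>a\<in>gcarrier G1. \<forall>b\<in>gcarrier G1. \<sigma> (gplus G1 a b) = gplus G2 (\<sigma> a) (\<sigma> b)) \<and>
        (\<forall>a\<in>gcarrier G1. \<forall>b\<in>gcarrier G1. gle G1 a b \<longrightarrow> gle G2 (\<sigma> a) (\<sigma> b)) \<and>
        (\<forall>x. v2 x = map_option \<sigma> (v1 x)))"

end

theory Submission
  imports Defs
begin


locale SHF =
  fixes hadd :: "'a \<Rightarrow> 'a \<Rightarrow> 'a set" and mul :: "'a \<Rightarrow> 'a \<Rightarrow> 'a" and z one :: 'a
  assumes hf: "hyperfield hadd mul z one"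
    and sc: "superiorly_canonical hadd z"
begin

abbreviation neg where "neg x \<equiv> hneg hadd z x"
abbreviation B where "B x \<equiv> hsub hadd z x x"
abbreviation sadd where "sadd A C \<equiv> setadd hadd A C"

lemma ch: "canonical_hypergroup hadd z" using hf unfolding hyperfield_def by blast

lemma assoc1: "sadd (hadd x y) {w} = sadd {x} (hadd y w)"
  using ch unfolding canonical_hypergroup_def by blast
lemma comm: "hadd x y = hadd y x"
  using ch unfolding canonical_hypergroup_def by blast
lemma exinv: "\<exists>!y. z \<in> hadd x y"
  using ch unfolding canonical_hypergroup_def by blast
lemma rev1: "w \<in> hadd x y \<Longrightarrow> y \<in> hadd w (neg x)"
  using ch unfolding canonical_hypergroup_def by blast

lemma neg_in: "z \<in> hadd x (neg x)"
  unfolding hneg_def using exinv[of x] by (metis theI')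
lemma neg_uniq: "z \<in> hadd x y \<Longrightarrow> y = neg x"
  using exinv[of x] neg_in[of x] by blast
lemma neg_neg[simp]: "neg (neg x) = x"
  using neg_uniq[of "neg x" x] neg_in[of x] comm by metis

lemma sc1: "x \<in> hadd x y \<Longrightarrow> hadd x y = {x}"
  using sc unfolding superiorly_canonical_def by blast
lemma sc2: "hadd x y \<inter> hadd u t \<noteq> {} \<Longrightarrow> hadd x y \<subseteq> hadd u t \<or> hadd u t \<subseteq> hadd x y"
  using sc unfolding superiorly_canonical_def by blast
lemma sc3: "x \<noteq> y \<Longrightarrow> u \<in> hsub hadd z x y \<Longrightarrow> t \<in> hsub hadd z x y \<Longrightarrow> B u = B t"
  using sc unfolding superiorly_canonical_def by blast
lemma sc4: "x \<in> B u \<Longrightarrow> y \<notin> B u \<Longrightarrow> B x \<subseteq> B y"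
  using sc unfolding superiorly_canonical_def by blast

lemma in_zero: "x \<in> hadd z x"
  using rev1[OF neg_in[of "neg x"]] by simp

lemma zero_l[simp]: "hadd z x = {x}"
  using sc1[of x z] in_zero[of x] comm by metis
lemma zero_r[simp]: "hadd x z = {x}"
  using zero_l comm by metis

lemma neg_z[simp]: "neg z = z"
  using neg_uniq[of z z] by simp

lemma setadd_single[simp]: "sadd {a} {b} = hadd a b"
  unfolding setadd_def by simp

lemma nonempty: "hadd x y \<noteq> {}"
proof
  assume e: "hadd x y = {}"
  have "sadd (hadd x y) {neg y} = sadd {x} (hadd y (neg y))" by (rule assoc1)
  moreover have "x \<in> sadd {x} (hadd y (neg y))" using neg_in[of y]
    unfolding setadd_def by force
  ultimately show False using e unfolding setadd_def by simp
qed


lemmas hfc = hf[unfolded hyperfield_def]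
lemma mcomm: "mul x y = mul y x" using conjunct1[OF conjunct2[OF hfc]] by blast
lemma massoc: "mul (mul x y) w = mul x (mul y w)" using conjunct1[OF conjunct2[OF conjunct2[OF hfc]]] by blast
lemma mzero_l[simp]: "mul z x = z" using conjunct1[OF conjunct2[OF conjunct2[OF conjunct2[OF hfc]]]] by blast
lemma mzero_r[simp]: "mul x z = z" using mzero_l mcomm by metis
lemma distr: "mul x ` hadd y w = hadd (mul x y) (mul x w)"
proof -
  have "\<forall>x y w. mul x ` hadd y w = sadd {mul x y} {mul x w}" using conjunct1[OF conjunct2[OF conjunct2[OF conjunct2[OF conjunct2[OF hfc]]]]] by blast
  then show ?thesis by simp
qed
lemma one_ne: "one \<noteq> z" using conjunct1[OF conjunct2[OF conjunct2[OF conjunct2[OF conjunct2[OF conjunct2[OF hfc]]]]]] by blast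
lemma mone_l[simp]: "mul one x = x" using conjunct1[OF conjunct2[OF conjunct2[OF conjunct2[OF conjunct2[OF conjunct2[OF conjunct2[OF hfc]]]]]]] by blast
lemma mone_r[simp]: "mul x one = x" using mone_l mcomm by metis
lemma nozd: "x \<noteq> z \<Longrightarrow> y \<noteq> z \<Longrightarrow> mul x y \<noteq> z" using conjunct1[OF conjunct2[OF conjunct2[OF conjunct2[OF conjunct2[OF conjunct2[OF conjunct2[OF conjunct2[OF hfc]]]]]]]] by blast
lemma exinvm: "x \<noteq> z \<Longrightarrow> \<exists>y. y \<noteq> z \<and> mul x y = one" using conjunct2[OF conjunct2[OF conjunct2[OF conjunct2[OF conjunct2[OF conjunct2[OF conjunct2[OF conjunct2[OF hfc]]]]]]]] by blast

definition inv where "inv x = (SOME y. y \<noteq> z \<and> mul x y = one)"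
lemma inv: "x \<noteq> z \<Longrightarrow> inv x \<noteq> z \<and> mul x (inv x) = one"
  unfolding inv_def by (rule someI_ex[OF exinvm])

lemma mcancel: "a \<noteq> z \<Longrightarrow> mul a x = mul a y \<Longrightarrow> x = y"
proof -
  assume a: "a \<noteq> z" and e: "mul a x = mul a y"
  have i: "mul (inv a) a = one" using inv[OF a] mcomm by metis
  have "x = mul (mul (inv a) a) x" using i by simp
  also have "\<dots> = mul (mul (inv a) a) y" using e by (simp only: massoc)
  also have "\<dots> = y" using i by simp
  finally show ?thesis .
qed

lemma img_cancel_sub: "a \<noteq> z \<Longrightarrow> mul a ` S \<subseteq> mul a ` T \<Longrightarrow> S \<subseteq> T"
  using mcancel by blast
lemma img_cancel: "a \<noteq> z \<Longrightarrow> mul a ` S = mul a ` T \<Longrightarrow> S = T"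
  using img_cancel_sub by blast

lemma mul_m1: "mul (neg one) x = neg x"
proof -
  have "mul x ` hadd one (neg one) = hadd x (mul x (neg one))" using distr by simp
  moreover have "z \<in> mul x ` hadd one (neg one)" using neg_in[of one]
    using image_eqI[of z "mul x" z] by simp
  ultimately have "z \<in> hadd x (mul x (neg one))" by simp
  then have "mul x (neg one) = neg x" by (rule neg_uniq)
  then show ?thesis by (simp add: mcomm)
qed

lemma neg_mul: "neg (mul a b) = mul a (neg b)"
proof -
  have "neg (mul a b) = mul (neg one) (mul a b)" by (simp add: mul_m1)
  also have "\<dots> = mul a (mul (neg one) b)" by (metis massoc mcomm)
  also have "\<dots> = mul a (neg b)" by (simp add: mul_m1)
  finally show ?thesis .
qed

lemma neg_img: "neg ` hadd x y = hadd (neg x) (neg y)"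
proof -
  have f: "mul (neg one) = (\<lambda>x. neg x)" by (rule ext) (rule mul_m1)
  show ?thesis using distr[of "neg one" x y] unfolding f .
qed

lemma B_mul: "B (mul a x) = mul a ` B x"
  unfolding hsub_def by (simp add: distr neg_mul)

lemma z_in_B: "z \<in> B x" unfolding hsub_def by (rule neg_in)
lemma B_z[simp]: "B z = {z}" unfolding hsub_def by simp

lemma B_sym: "t \<in> B x \<Longrightarrow> neg t \<in> B x"
proof -
  assume "t \<in> B x"
  then have "neg t \<in> neg ` B x" by blast
  also have "neg ` B x = B x" unfolding hsub_def neg_img by (simp add: comm)
  finally show ?thesis .
qed

lemma K2: "x \<in> hadd x t \<Longrightarrow> t \<in> B x"
  unfolding hsub_def using rev1 by blast

lemma K1: "t \<in> B x \<Longrightarrow> hadd x t = {x}"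
proof -
  assume t: "t \<in> B x"
  have gen: "hadd x (neg s) = {x}" if s: "s \<in> B x" for s
  proof -
    have "neg x \<in> hadd s (neg x)" using rev1 s unfolding hsub_def by blast
    then have "hadd (neg x) s = {neg x}" using sc1 comm by metis
    then have "neg ` hadd (neg x) s = {x}" by simp
    then show ?thesis using neg_img by simp
  qed
  show ?thesis using gen[OF B_sym[OF t]] by simp
qed

lemma B_closed: "a \<in> B x \<Longrightarrow> b \<in> B x \<Longrightarrow> c \<in> hadd a b \<Longrightarrow> c \<in> B x"
proof -
  assume a: "a \<in> B x" and b: "b \<in> B x" and c: "c \<in> hadd a b"
  have "sadd (hadd x a) {b} = sadd {x} (hadd a b)" by (rule assoc1)
  then have "sadd {x} (hadd a b) = hadd x b" using K1[OF a] by simp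
  then have "hadd x c \<subseteq> {x}" using K1[OF b] c unfolding setadd_def by blast
  then have "x \<in> hadd x c" using nonempty by blast
  then show ?thesis by (rule K2)
qed

lemma notin_B: "x \<noteq> z \<Longrightarrow> x \<notin> B x"
proof
  assume "x \<noteq> z" "x \<in> B x"
  then have "hadd x (neg x) = {x}" unfolding hsub_def using sc1 by simp
  then show False using neg_in[of x] \<open>x \<noteq> z\<close> by simp
qed

lemma B_comp: "B x \<subseteq> B y \<or> B y \<subseteq> B x"
proof -
  have "hadd x (neg x) \<inter> hadd y (neg y) \<noteq> {}" using neg_in[of x] neg_in[of y] by blast
  then show ?thesis unfolding hsub_def by (rule sc2)
qed

lemma B_sadd: "sadd (B x) (B x) \<subseteq> B x"
  unfolding setadd_def using B_closed by blast

lemma sadd_mono: "A \<subseteq> A' \<Longrightarrow> C \<subseteq> C' \<Longrightarrow> sadd A C \<subseteq> sadd A' C'"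
  unfolding setadd_def by blast

lemma sadd_comm: "sadd A C = sadd C A"
  unfolding setadd_def using comm by blast

lemma assoc_mem: "(\<exists>e. e \<in> hadd a c \<and> x \<in> hadd e d) \<longleftrightarrow> (\<exists>f. f \<in> hadd c d \<and> x \<in> hadd a f)"
proof -
  have "x \<in> sadd (hadd a c) {d} \<longleftrightarrow> x \<in> sadd {a} (hadd c d)" using assoc1 by simp
  then show ?thesis unfolding setadd_def by blast
qed

lemma mem_sadd: "x \<in> sadd A C \<longleftrightarrow> (\<exists>a\<in>A. \<exists>c\<in>C. x \<in> hadd a c)"
  unfolding setadd_def by blast

lemma sadd_assoc: "sadd (sadd A C) D = sadd A (sadd C D)"
proof (rule set_eqI)
  fix x
  have "x \<in> sadd (sadd A C) D \<longleftrightarrow> (\<exists>a\<in>A. \<exists>c\<in>C. \<exists>d\<in>D. \<exists>e. e \<in> hadd a c \<and> x \<in> hadd e d)"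
    by (fastforce simp: mem_sadd)
  also have "\<dots> \<longleftrightarrow> (\<exists>a\<in>A. \<exists>c\<in>C. \<exists>d\<in>D. \<exists>f. f \<in> hadd c d \<and> x \<in> hadd a f)"
    using assoc_mem by simp
  also have "\<dots> \<longleftrightarrow> x \<in> sadd A (sadd C D)"
    by (fastforce simp: mem_sadd)
  finally show "x \<in> sadd (sadd A C) D \<longleftrightarrow> x \<in> sadd A (sadd C D)" .
qed

lemma sadd_swap: "sadd (sadd A C) (sadd D E) = sadd (sadd A D) (sadd C E)"
proof -
  have "sadd (sadd A C) (sadd D E) = sadd A (sadd (sadd C D) E)" by (simp add: sadd_assoc)
  also have "\<dots> = sadd A (sadd (sadd D C) E)" by (simp add: sadd_comm[of C D])
  also have "\<dots> = sadd (sadd A D) (sadd C E)" by (simp add: sadd_assoc)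
  finally show ?thesis .
qed

lemma diffB: "a \<in> hadd x y \<Longrightarrow> b \<in> hadd x y \<Longrightarrow> hadd a (neg b) \<subseteq> sadd (B x) (B y)"
proof -
  assume a: "a \<in> hadd x y" and b: "b \<in> hadd x y"
  have nb: "neg b \<in> hadd (neg x) (neg y)" using b neg_img by blast
  have "hadd a (neg b) \<subseteq> sadd (hadd x y) (hadd (neg x) (neg y))"
    using a nb unfolding setadd_def by blast
  also have "\<dots> = sadd (sadd {x} {y}) (sadd {neg x} {neg y})" by simp
  also have "\<dots> = sadd (sadd {x} {neg x}) (sadd {y} {neg y})" by (rule sadd_swap)
  also have "\<dots> = sadd (B x) (B y)" unfolding hsub_def by simp
  finally show ?thesis .
qed

end


context SHF begin

definition Gam where "Gam = {B x | x. x \<noteq> z}"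
definition rep where "rep S = (SOME x. x \<noteq> z \<and> B x = S)"
definition gp where "gp S T = B (mul (rep S) (rep T))"
definition GG :: "'a set ogroup" where
  "GG = \<lparr>gcarrier = Gam, gplus = gp, gzero = B one, gle = (\<lambda>S T. T \<subseteq> S)\<rparr>"
definition vv where "vv x = (if x = z then None else Some (B x))"
definition rho where "rho = {B t | t. t \<noteq> z \<and> t \<notin> B one}"

lemma GG_simps[simp]: "gcarrier GG = Gam" "gplus GG = gp" "gzero GG = B one" "gle GG S T = (T \<subseteq> S)"
  unfolding GG_def by simp_all

lemma rep: "x \<noteq> z \<Longrightarrow> rep (B x) \<noteq> z \<and> B (rep (B x)) = B x"
  unfolding rep_def by (rule someI[of _ x]) simp

lemma B_wd: "B x = B x' \<Longrightarrow> B (mul x y) = B (mul x' y)"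
  by (metis B_mul mcomm)

lemma gp_B[simp]: "x \<noteq> z \<Longrightarrow> y \<noteq> z \<Longrightarrow> gp (B x) (B y) = B (mul x y)"
  unfolding gp_def using rep[of x] rep[of y] B_wd mcomm by metis

lemma ball_Gam: "(\<forall>a\<in>Gam. P a) \<longleftrightarrow> (\<forall>x. x \<noteq> z \<longrightarrow> P (B x))"
  unfolding Gam_def by blast

lemma B_in_Gam: "x \<noteq> z \<Longrightarrow> B x \<in> Gam" unfolding Gam_def by blast

lemma bex_Gam: "(\<exists>a\<in>Gam. P a) \<longleftrightarrow> (\<exists>x. x \<noteq> z \<and> P (B x))"
  unfolding Gam_def by blast

lemma oag: "ordered_ab_group GG"
  unfolding ordered_ab_group_def GG_simps ball_Gam
proof (intro conjI allI impI)
  show "B one \<in> Gam" using one_ne by (rule B_in_Gam)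
  fix x y w
  assume x: "x \<noteq> z"
  then show "gp (B x) (B one) = B x" using one_ne by simp
  show "B x \<subseteq> B x" by simp
  show "\<exists>b\<in>Gam. gp (B x) b = B one"
    unfolding bex_Gam using inv[OF x] x by (metis gp_B)
  assume y: "y \<noteq> z"
  show "gp (B x) (B y) \<in> Gam" using x y nozd B_in_Gam by simp
  show "gp (B x) (B y) = gp (B y) (B x)" using x y by (simp add: mcomm)
  show "B y \<subseteq> B x \<or> B x \<subseteq> B y" using B_comp by blast
  show "B y \<subseteq> B x \<Longrightarrow> B x \<subseteq> B y \<Longrightarrow> B x = B y" by blast
  assume w: "w \<noteq> z"
  show "gp (gp (B x) (B y)) (B w) = gp (B x) (gp (B y) (B w))"
    using x y w nozd by (simp add: massoc)
  show "B y \<subseteq> B x \<Longrightarrow> B w \<subseteq> B y \<Longrightarrow> B w \<subseteq> B x" by blast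
  show "B y \<subseteq> B x \<Longrightarrow> gp (B y) (B w) \<subseteq> gp (B x) (B w)"
    using x y w by (simp add: mcomm[of _ w] B_mul image_mono)
qed


lemma vv_z[simp]: "vv z = None" unfolding vv_def by simp
lemma vv_nz[simp]: "x \<noteq> z \<Longrightarrow> vv x = Some (B x)" unfolding vv_def by simp

lemma value_group_vv: "value_group z vv = Gam"
  unfolding value_group_def Gam_def vv_def by auto

lemma ext_min_case:
  assumes "ext_min GG (vv x) (vv y) = Some g"
  shows "\<exists>c. (c = x \<or> c = y) \<and> c \<noteq> z \<and> g = B c \<and> B x \<subseteq> B c \<and> B y \<subseteq> B c"
proof (cases "x = z")
  case True
  then show ?thesis using assms z_in_B
    by (cases "y = z") (auto simp: ext_min_def ext_le_def)
next
  case False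
  show ?thesis
  proof (cases "y = z")
    case True
    then show ?thesis using assms z_in_B False by (auto simp: ext_min_def ext_le_def)
  next
    case False2: False
    show ?thesis
    proof (cases "B y \<subseteq> B x")
      case True
      then show ?thesis using assms False False2 by (auto simp: ext_min_def ext_le_def)
    next
      case False3: False
      then have "B x \<subseteq> B y" using B_comp by blast
      then show ?thesis using assms False False2 False3 by (auto simp: ext_min_def ext_le_def)
    qed
  qed
qed

lemma valuation_vv: "valuation hadd mul z GG vv"
  unfolding valuation_def
proof (intro conjI allI impI)
  show "ordered_ab_group GG" by (rule oag)
  show "range vv = Some ` gcarrier GG \<union> {None}"
    unfolding GG_simps Gam_def vv_def by auto
  fix x y w
  show "(vv x = None) = (x = z)" unfolding vv_def by simp
  show "vv (mul x y) = ext_plus GG (vv x) (vv y)"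
    using nozd by (cases "x = z"; cases "y = z") (auto simp: ext_plus_def)
  assume w: "w \<in> hadd x y"
  show "ext_le GG (ext_min GG (vv x) (vv y)) (vv w)"
  proof (cases "w = z")
    case True
    then show ?thesis by (simp add: ext_le_def)
  next
    case False
    have "\<not> (x = z \<and> y = z)" using w False by auto
    then obtain g where g: "ext_min GG (vv x) (vv y) = Some g"
      by (cases "x = z"; cases "y = z"; cases "B y \<subseteq> B x") (auto simp: ext_min_def ext_le_def)
    from ext_min_case[OF g] obtain c where c: "c \<noteq> z" "g = B c" "B x \<subseteq> B c" "B y \<subseteq> B c"
      by blast
    have "B w \<subseteq> sadd (B x) (B y)" using diffB[OF w w] unfolding hsub_def .
    also have "\<dots> \<subseteq> sadd (B c) (B c)" using c by (intro sadd_mono)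
    also have "\<dots> \<subseteq> B c" by (rule B_sadd)
    finally show ?thesis using g c False by (simp add: ext_le_def)
  qed
qed

lemma Inv: "s \<in> B c \<Longrightarrow> B s' = B s \<Longrightarrow> s' \<noteq> z \<Longrightarrow> s \<noteq> z \<Longrightarrow> s' \<in> B c"
proof -
  assume sc: "s \<in> B c" and e: "B s' = B s" and s': "s' \<noteq> z" and s: "s \<noteq> z"
  define u where "u = mul s' (inv s)"
  have i: "mul (inv s) s = one" using inv[OF s] mcomm by metis
  have us: "mul u s = s'" unfolding u_def massoc i by simp
  have "mul s ` B u = B s" using us e B_mul mcomm by metis
  also have "\<dots> = mul s ` B one" using B_mul[of s one] by simp
  finally have bu: "B u = B one" using img_cancel s by blast
  have "s' \<in> mul u ` B c" using us sc by blast
  also have "\<dots> = mul c ` B u" using B_mul mcomm by metis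
  also have "\<dots> = B c" using bu B_mul[of c one] by simp
  finally show ?thesis .
qed

lemma shift: "c \<noteq> z \<Longrightarrow> seg_shift GG rho (B c) = {B s | s. s \<noteq> z \<and> s \<notin> B c}"
proof -
  assume c: "c \<noteq> z"
  have Bc: "B c = mul c ` B one" using B_mul[of c one] by simp
  show ?thesis
  proof (rule set_eqI, rule iffI)
    fix a assume "a \<in> seg_shift GG rho (B c)"
    then obtain t where t: "t \<noteq> z" "t \<notin> B one" "a = gp (B t) (B c)"
      unfolding seg_shift_def rho_def by auto
    have "mul t c \<notin> B c"
    proof
      assume "mul t c \<in> B c"
      then have "mul c t \<in> mul c ` B one" using Bc mcomm by metis
      then show False using t mcancel c by blast
    qed
    then show "a \<in> {B s | s. s \<noteq> z \<and> s \<notin> B c}" using t c nozd by auto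
  next
    fix a assume "a \<in> {B s | s. s \<noteq> z \<and> s \<notin> B c}"
    then obtain s where s: "s \<noteq> z" "s \<notin> B c" "a = B s" by blast
    define t where "t = mul s (inv c)"
    have i: "mul (inv c) c = one" using inv[OF c] mcomm by metis
    have tc: "mul t c = s" unfolding t_def massoc i by simp
    have tz: "t \<noteq> z" using tc s by auto
    have "t \<notin> B one"
    proof
      assume "t \<in> B one"
      then have "mul c t \<in> B c" using Bc by blast
      then show False using tc s mcomm by metis
    qed
    then have "B t \<in> rho" unfolding rho_def using tz by blast
    moreover have "a = gp (B t) (B c)" using tz c tc s by simp
    ultimately show "a \<in> seg_shift GG rho (B c)" unfolding seg_shift_def by simp
  qed
qed

lemma Mlem: "c \<noteq> z \<Longrightarrow> (vv s \<notin> Some ` seg_shift GG rho (B c)) \<longleftrightarrow> s \<in> B c"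
proof -
  assume c: "c \<noteq> z"
  show ?thesis
  proof (cases "s = z")
    case True then show ?thesis using z_in_B by auto
  next
    case False
    then show ?thesis unfolding shift[OF c] using Inv by fastforce
  qed
qed


lemma KVH1: "z \<notin> hadd x y \<Longrightarrow> \<exists>\<alpha>. vv ` hadd x y = {\<alpha>}"
proof -
  assume nz: "z \<notin> hadd x y"
  obtain a where a: "a \<in> hadd x y" using nonempty by blast
  have xy: "x \<noteq> neg y"
  proof
    assume "x = neg y"
    then have "z \<in> hadd y x" using neg_in[of y] by simp
    then show False using nz comm[of x y] by simp
  qed
  have hs: "hsub hadd z x (neg y) = hadd x y" unfolding hsub_def by simp
  have "vv ` hadd x y = {Some (B a)}"
  proof (rule set_eqI, rule iffI)
    fix b assume "b \<in> vv ` hadd x y"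
    then obtain t where t: "t \<in> hadd x y" "b = vv t" by blast
    have t1: "t \<in> hsub hadd z x (neg y)" using hs t(1) by simp
    have a1: "a \<in> hsub hadd z x (neg y)" using hs a by simp
    have "B t = B a" by (rule sc3[OF xy t1 a1])
    have "t \<noteq> z" using t nz by blast
    then show "b \<in> {Some (B a)}" using t \<open>B t = B a\<close> by simp
  next
    fix b assume "b \<in> {Some (B a)}"
    have "a \<noteq> z" using a nz by blast
    then have "vv a = b" using \<open>b \<in> {Some (B a)}\<close> by simp
    then show "b \<in> vv ` hadd x y" using a by blast
  qed
  then show ?thesis by blast
qed

lemma rho_init: "initial_segment GG (value_group z vv) rho"
  unfolding initial_segment_def value_group_vv
proof (intro conjI ballI impI)
  show "rho \<subseteq> Gam" unfolding rho_def Gam_def by blast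
  fix d g assume d: "d \<in> rho" and g: "g \<in> Gam" and lt: "glt GG g d"
  obtain t where t: "t \<noteq> z" "t \<notin> B one" "d = B t" using d unfolding rho_def by blast
  obtain s where s: "s \<noteq> z" "g = B s" using g unfolding Gam_def by blast
  have sub: "B t \<subseteq> B s" "B s \<noteq> B t" using lt t s unfolding glt_def by auto
  have "s \<notin> B one"
  proof
    assume "s \<in> B one"
    then have "B s \<subseteq> B t" using sc4 t by blast
    then show False using sub by blast
  qed
  then show "g \<in> rho" unfolding rho_def using s by blast
qed

lemma zero_rho: "B one \<in> rho"
  unfolding rho_def using one_ne notin_B by blast

lemma KVH2: "w \<in> hadd x y \<Longrightarrow> ext_min GG (vv x) (vv y) = Some g \<Longrightarrow>
   (t \<in> hadd x y \<longleftrightarrow> (\<forall>s \<in> hsub hadd z w t. vv s \<notin> Some ` seg_shift GG rho g))"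
proof -
  assume w: "w \<in> hadd x y" and g: "ext_min GG (vv x) (vv y) = Some g"
  from ext_min_case[OF g] obtain c where c: "c = x \<or> c = y" "c \<noteq> z" "g = B c" "B x \<subseteq> B c" "B y \<subseteq> B c"
    by blast
  have "(\<forall>s \<in> hsub hadd z w t. vv s \<notin> Some ` seg_shift GG rho g) \<longleftrightarrow> hadd w (neg t) \<subseteq> B c"
    unfolding hsub_def[of hadd z w t] c(3) using Mlem[OF c(2)] by blast
  also have "\<dots> \<longleftrightarrow> t \<in> hadd x y"
  proof
    assume t: "t \<in> hadd x y"
    have "hadd w (neg t) \<subseteq> sadd (B x) (B y)" by (rule diffB[OF w t])
    also have "\<dots> \<subseteq> sadd (B c) (B c)" using c by (intro sadd_mono)
    also have "\<dots> \<subseteq> B c" by (rule B_sadd)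
    finally show "hadd w (neg t) \<subseteq> B c" .
  next
    assume sub: "hadd w (neg t) \<subseteq> B c"
    obtain s where s: "s \<in> hadd w (neg t)" using nonempty by blast
    have "s \<in> hadd (neg t) w" using s comm[of w "neg t"] by simp
    then have "w \<in> hadd s (neg (neg t))" by (rule rev1)
    then have "w \<in> hadd s t" by simp
    then have ts: "t \<in> hadd w (neg s)" using rev1 by blast
    have b: "neg s \<in> B c" using B_sym s sub by blast
    have gen: "hadd w b \<subseteq> hadd a e" if we: "w \<in> hadd a e" and bb: "b \<in> B a" for a e b
    proof -
      have we': "w \<in> hadd e a" using we comm[of a e] by simp
      have "hadd w b \<subseteq> sadd (hadd e a) {b}" using we' unfolding setadd_def by blast
      also have "\<dots> = sadd {e} (hadd a b)" by (rule assoc1)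
      also have "\<dots> = hadd a e" using K1[OF bb] comm[of e a] by simp
      finally show ?thesis .
    qed
    show "t \<in> hadd x y"
    proof (cases "c = x")
      case True
      then show ?thesis using gen[OF w] b ts by blast
    next
      case False
      then have "c = y" using c by blast
      moreover have wyx: "w \<in> hadd y x" using w comm[of x y] by simp
      ultimately have "hadd w (neg s) \<subseteq> hadd y x" using gen[OF wyx] b by blast
      then show ?thesis using ts comm[of x y] by blast
    qed
  qed
  finally show ?thesis by blast
qed

lemma krasner_vv: "krasner_valuation hadd mul z GG vv rho"
  unfolding krasner_valuation_def
proof (intro conjI allI impI)
  show "valuation hadd mul z GG vv" by (rule valuation_vv)
  show "initial_segment GG (value_group z vv) rho" by (rule rho_init)
  show "gzero GG \<in> rho" using zero_rho by simp
  fix x y w t g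
  show "z \<notin> hadd x y \<Longrightarrow> \<exists>\<alpha>. vv ` hadd x y = {\<alpha>}" by (rule KVH1)
  show "w \<in> hadd x y \<Longrightarrow> ext_min GG (vv x) (vv y) = Some g \<Longrightarrow>
   (t \<in> hadd x y \<longleftrightarrow> (\<forall>s \<in> hsub hadd z w t. vv s \<notin> Some ` seg_shift GG rho g))"
    by (rule KVH2)
qed

lemma ig_rho: "ig GG rho = {B one}"
proof (rule set_eqI, rule iffI)
  fix g assume "g \<in> ig GG rho"
  then have g: "g \<in> Gam" "seg_shift GG rho g = rho" unfolding ig_def by auto
  obtain c where c: "c \<noteq> z" "g = B c" using g unfolding Gam_def by blast
  have e: "{B s | s. s \<noteq> z \<and> s \<notin> B c} = {B s | s. s \<noteq> z \<and> s \<notin> B one}"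
    using g c shift[OF c(1)] unfolding rho_def by simp
  have "B c = B one"
  proof (rule ccontr)
    assume ne: "B c \<noteq> B one"
    show False
    proof (cases "B c \<subseteq> B one")
      case True
      then obtain t where t: "t \<in> B one" "t \<notin> B c" using ne by blast
      then have tz: "t \<noteq> z" using z_in_B by metis
      have "B t \<in> {B s | s. s \<noteq> z \<and> s \<notin> B c}" using t tz by blast
      then obtain s where s: "s \<noteq> z" "s \<notin> B one" "B t = B s" using e by auto
      then show False using Inv[OF t(1) s(3)[symmetric] s(1) tz] by blast
    next
      case False
      then obtain t where t: "t \<in> B c" "t \<notin> B one" by blast
      then have tz: "t \<noteq> z" using z_in_B by metis
      have "B t \<in> {B s | s. s \<noteq> z \<and> s \<notin> B one}" using t tz by blast
      then have "B t \<in> {B s | s. s \<noteq> z \<and> s \<notin> B c}" using e by simp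
      then obtain s where s: "s \<noteq> z" "s \<notin> B c" "B t = B s" by blast
      then show False using Inv[OF t(1) s(3)[symmetric] s(1) tz] by blast
    qed
  qed
  then show "g \<in> {B one}" using c by simp
next
  fix g assume "g \<in> {B one}"
  then have "g = B one" by simp
  moreover have "seg_shift GG rho (B one) = rho" using shift[OF one_ne] unfolding rho_def by simp
  ultimately show "g \<in> ig GG rho" unfolding ig_def using B_in_Gam one_ne by simp
qed

end


locale OAG =
  fixes G :: "'g ogroup"
  assumes oagG: "ordered_ab_group G"
begin

abbreviation car where "car \<equiv> gcarrier G"
abbreviation pl where "pl \<equiv> gplus G"
abbreviation ze where "ze \<equiv> gzero G"
abbreviation le where "le \<equiv> gle G"

lemmas O = oagG[unfolded ordered_ab_group_def]

lemma ze_car: "ze \<in> car" using conjunct1[OF O] by blast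
lemma cl: "a \<in> car \<Longrightarrow> b \<in> car \<Longrightarrow> pl a b \<in> car" using conjunct1[OF conjunct2[OF O]] by blast
lemma ass: "a \<in> car \<Longrightarrow> b \<in> car \<Longrightarrow> c \<in> car \<Longrightarrow> pl (pl a b) c = pl a (pl b c)" using conjunct1[OF conjunct2[OF conjunct2[OF O]]] by blast
lemma com: "a \<in> car \<Longrightarrow> b \<in> car \<Longrightarrow> pl a b = pl b a" using conjunct1[OF conjunct2[OF conjunct2[OF conjunct2[OF O]]]] by blast
lemma rz: "a \<in> car \<Longrightarrow> pl a ze = a" using conjunct1[OF conjunct2[OF conjunct2[OF conjunct2[OF conjunct2[OF O]]]]] by blast
lemma lz: "a \<in> car \<Longrightarrow> pl ze a = a" using rz com ze_car by metis
lemma exn: "a \<in> car \<Longrightarrow> \<exists>b\<in>car. pl a b = ze" using conjunct1[OF conjunct2[OF conjunct2[OF conjunct2[OF conjunct2[OF conjunct2[OF O]]]]]] by blast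
lemma refl: "a \<in> car \<Longrightarrow> le a a" using conjunct1[OF conjunct2[OF conjunct2[OF conjunct2[OF conjunct2[OF conjunct2[OF conjunct2[OF O]]]]]]] by blast
lemma anti: "a \<in> car \<Longrightarrow> b \<in> car \<Longrightarrow> le a b \<Longrightarrow> le b a \<Longrightarrow> a = b" using conjunct1[OF conjunct2[OF conjunct2[OF conjunct2[OF conjunct2[OF conjunct2[OF conjunct2[OF conjunct2[OF O]]]]]]]] by blast
lemma trans: "a \<in> car \<Longrightarrow> b \<in> car \<Longrightarrow> c \<in> car \<Longrightarrow> le a b \<Longrightarrow> le b c \<Longrightarrow> le a c" using conjunct1[OF conjunct2[OF conjunct2[OF conjunct2[OF conjunct2[OF conjunct2[OF conjunct2[OF conjunct2[OF conjunct2[OF O]]]]]]]]] by blast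
lemma total: "a \<in> car \<Longrightarrow> b \<in> car \<Longrightarrow> le a b \<or> le b a" using conjunct1[OF conjunct2[OF conjunct2[OF conjunct2[OF conjunct2[OF conjunct2[OF conjunct2[OF conjunct2[OF conjunct2[OF conjunct2[OF O]]]]]]]]]] by blast
lemma mono: "a \<in> car \<Longrightarrow> b \<in> car \<Longrightarrow> c \<in> car \<Longrightarrow> le a b \<Longrightarrow> le (pl a c) (pl b c)" using conjunct2[OF conjunct2[OF conjunct2[OF conjunct2[OF conjunct2[OF conjunct2[OF conjunct2[OF conjunct2[OF conjunct2[OF conjunct2[OF O]]]]]]]]]] by blast

definition gn where "gn a = (SOME b. b \<in> car \<and> pl a b = ze)"
lemma gn: "a \<in> car \<Longrightarrow> gn a \<in> car \<and> pl a (gn a) = ze"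
  unfolding gn_def using exn by (metis (mono_tags, lifting) someI_ex)
lemma gn_car: "a \<in> car \<Longrightarrow> gn a \<in> car" using gn by blast
lemma gn_r: "a \<in> car \<Longrightarrow> pl a (gn a) = ze" using gn by blast
lemma gn_l: "a \<in> car \<Longrightarrow> pl (gn a) a = ze" using gn com by metis

lemma cancel: "a \<in> car \<Longrightarrow> b \<in> car \<Longrightarrow> c \<in> car \<Longrightarrow> pl a c = pl b c \<Longrightarrow> a = b"
proof -
  assume a: "a \<in> car" and b: "b \<in> car" and c: "c \<in> car" and e: "pl a c = pl b c"
  have "a = pl (pl a c) (gn c)" using a c ass gn_car gn_r rz by simp
  also have "\<dots> = pl (pl b c) (gn c)" using e by simp
  also have "\<dots> = b" using b c ass gn_car gn_r rz by simp
  finally show ?thesis .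
qed

lemma mono_l: "a \<in> car \<Longrightarrow> b \<in> car \<Longrightarrow> c \<in> car \<Longrightarrow> le a b \<Longrightarrow> le (pl c a) (pl c b)"
  using mono com by metis

lemma double: "g \<in> car \<Longrightarrow> pl g g = ze \<Longrightarrow> g = ze"
proof -
  assume g: "g \<in> car" and e: "pl g g = ze"
  show ?thesis
  proof (cases "le ze g")
    case True
    then have "le (pl ze g) (pl g g)" using mono g ze_car by blast
    then have "le g ze" using e lz g by simp
    then show ?thesis using anti True g ze_car by blast
  next
    case False
    then have le: "le g ze" using total g ze_car by blast
    then have "le (pl g g) (pl ze g)" using mono g ze_car by blast
    then have "le ze g" using e lz g by simp
    then show ?thesis using anti le g ze_car by blast
  qed
qed

lemma sub_le: "a \<in> car \<Longrightarrow> b \<in> car \<Longrightarrow> le a b \<Longrightarrow> le (pl a (gn b)) ze"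
  using mono[of a b "gn b"] gn_car gn_r by simp

lemma add_le: "d \<in> car \<Longrightarrow> e \<in> car \<Longrightarrow> le e ze \<Longrightarrow> le (pl d e) d"
  using mono_l[of e ze d] ze_car rz by simp

end

locale KV = SHF hadd mul z one + OAG G
  for hadd :: "'a \<Rightarrow> 'a \<Rightarrow> 'a set" and mul z one and G :: "'g ogroup" +
  fixes v :: "'a \<Rightarrow> 'g option" and \<rho> :: "'g set"
  assumes kv: "krasner_valuation hadd mul z G v \<rho>"
    and igv: "ig G \<rho> = {gzero G}"
begin

lemmas K = kv[unfolded krasner_valuation_def]
lemmas V = conjunct1[OF K, unfolded valuation_def]

lemma rng: "range v = Some ` car \<union> {None}" using conjunct1[OF conjunct2[OF V]] by blast
lemma vnone: "v x = None \<longleftrightarrow> x = z" using conjunct1[OF conjunct2[OF conjunct2[OF V]]] by simp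
lemma vmul: "v (mul x y) = ext_plus G (v x) (v y)" using conjunct1[OF conjunct2[OF conjunct2[OF conjunct2[OF V]]]] by blast
lemma kvh2: "w \<in> hadd x y \<Longrightarrow> ext_min G (v x) (v y) = Some g \<Longrightarrow>
        (t \<in> hadd x y \<longleftrightarrow> (\<forall>s \<in> hsub hadd z w t. v s \<notin> Some ` seg_shift G \<rho> g))"
  using conjunct2[OF conjunct2[OF conjunct2[OF conjunct2[OF K]]]] by blast
lemma init: "initial_segment G (value_group z v) \<rho>" using conjunct1[OF conjunct2[OF conjunct2[OF K]]] by blast

lemma v_some: "x \<noteq> z \<Longrightarrow> \<exists>a\<in>car. v x = Some a"
proof -
  assume "x \<noteq> z"
  then obtain a where a: "v x = Some a" using vnone by (cases "v x") auto
  have "v x \<in> Some ` car \<union> {None}" using rng by blast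
  then show ?thesis using a by auto
qed

lemma v_surj: "a \<in> car \<Longrightarrow> \<exists>x. x \<noteq> z \<and> v x = Some a"
proof -
  assume "a \<in> car"
  then have "Some a \<in> range v" using rng by blast
  then obtain x where "v x = Some a" by (metis rangeE)
  then show ?thesis using vnone by (metis option.distinct(1))
qed

lemma vg: "value_group z v = car"
  unfolding value_group_def using v_some v_surj by fastforce

lemma rho_car: "\<rho> \<subseteq> car" using init vg unfolding initial_segment_def by blast
lemma rho_down: "d \<in> \<rho> \<Longrightarrow> g \<in> car \<Longrightarrow> le g d \<Longrightarrow> g \<in> \<rho>"
  using init vg unfolding initial_segment_def glt_def by (cases "g = d") auto

lemma v_one: "v one = Some ze"
proof -
  obtain a where a: "a \<in> car" "v one = Some a" using v_some one_ne by blast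
  have "v one = ext_plus G (v one) (v one)" using vmul[of one one] by simp
  then have "pl a a = a" using a by (simp add: ext_plus_def)
  then have "pl a a = pl ze a" using lz a by simp
  then show ?thesis using cancel a ze_car by simp
qed

lemma v_m1: "v (neg one) = Some ze"
proof -
  have m: "neg one \<noteq> z" using one_ne neg_neg neg_z by metis
  obtain a where a: "a \<in> car" "v (neg one) = Some a" using v_some m by blast
  have "mul (neg one) (neg one) = one" using mul_m1 by simp
  then have "v one = ext_plus G (v (neg one)) (v (neg one))" using vmul by metis
  then have "pl a a = ze" using a v_one by (simp add: ext_plus_def)
  then show ?thesis using double a by simp
qed

lemma v_neg: "v (neg x) = v x"
proof -
  have "v (neg x) = ext_plus G (Some ze) (v x)" using vmul[of "neg one" x] v_m1 mul_m1 by simp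
  also have "\<dots> = v x"
  proof (cases "x = z")
    case True then show ?thesis using vnone[of z] by (simp add: ext_plus_def)
  next
    case False
    then obtain a where "a \<in> car" "v x = Some a" using v_some by blast
    then show ?thesis using lz by (simp add: ext_plus_def)
  qed
  finally show ?thesis .
qed

lemma KB: "x \<noteq> z \<Longrightarrow> v x = Some a \<Longrightarrow> (t \<in> B x \<longleftrightarrow> v t \<notin> Some ` seg_shift G \<rho> a)"
proof -
  assume x: "x \<noteq> z" and a: "v x = Some a"
  have ac: "a \<in> car" using v_some[OF x] a by auto
  have em: "ext_min G (v x) (v (neg x)) = Some a" using a v_neg refl[OF ac]
    by (simp add: ext_min_def ext_le_def)
  have "t \<in> hadd x (neg x) \<longleftrightarrow> (\<forall>s \<in> hsub hadd z z t. v s \<notin> Some ` seg_shift G \<rho> a)"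
    by (rule kvh2[OF neg_in em])
  also have "hsub hadd z z t = {neg t}" unfolding hsub_def by simp
  finally show ?thesis unfolding hsub_def[of hadd z x x] using v_neg by simp
qed

lemma shift_mono: "a \<in> car \<Longrightarrow> b \<in> car \<Longrightarrow> le a b \<Longrightarrow> seg_shift G \<rho> a \<subseteq> seg_shift G \<rho> b"
proof
  fix al assume a: "a \<in> car" and b: "b \<in> car" and ab: "le a b" and al: "al \<in> seg_shift G \<rho> a"
  then obtain d where d: "d \<in> \<rho>" "al = pl d a" unfolding seg_shift_def by blast
  have dc: "d \<in> car" using d rho_car by blast
  define e where "e = pl a (gn b)"
  have ec: "e \<in> car" unfolding e_def using a b cl gn_car by blast
  have "le e ze" unfolding e_def using sub_le a b ab by blast
  then have "le (pl d e) d" using add_le dc ec by blast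
  then have d'r: "pl d e \<in> \<rho>" using rho_down d dc ec cl by blast
  have "pl (pl d e) b = pl d (pl a (pl (gn b) b))" unfolding e_def using dc a b gn_car cl ass by simp
  also have "\<dots> = al" using d a gn_l b rz by simp
  finally show "al \<in> seg_shift G \<rho> b" unfolding seg_shift_def using d'r by force
qed

lemma U1: "x \<noteq> z \<Longrightarrow> y \<noteq> z \<Longrightarrow> v x = Some a \<Longrightarrow> v y = Some b \<Longrightarrow> le a b \<Longrightarrow> B y \<subseteq> B x"
proof
  fix t assume x: "x \<noteq> z" and y: "y \<noteq> z" and a: "v x = Some a" and b: "v y = Some b"
    and ab: "le a b" and t: "t \<in> B y"
  have ac: "a \<in> car" using v_some[OF x] a by auto
  have bc: "b \<in> car" using v_some[OF y] b by auto
  have "v t \<notin> Some ` seg_shift G \<rho> b" using KB[OF y b] t by blast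
  then have "v t \<notin> Some ` seg_shift G \<rho> a" using shift_mono[OF ac bc ab] by blast
  then show "t \<in> B x" using KB[OF x a] by blast
qed

lemma U2: "x \<noteq> z \<Longrightarrow> y \<noteq> z \<Longrightarrow> v x = Some a \<Longrightarrow> v y = Some b \<Longrightarrow> B y \<subseteq> B x \<Longrightarrow> le a b"
proof (rule ccontr)
  assume x: "x \<noteq> z" and y: "y \<noteq> z" and a: "v x = Some a" and b: "v y = Some b"
    and sub: "B y \<subseteq> B x" and nab: "\<not> le a b"
  have ac: "a \<in> car" using v_some[OF x] a by auto
  have bc: "b \<in> car" using v_some[OF y] b by auto
  have ba: "le b a" using total ac bc nab by blast
  have sh: "seg_shift G \<rho> a \<subseteq> seg_shift G \<rho> b"
  proof
    fix al assume al: "al \<in> seg_shift G \<rho> a"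
    then obtain d where d: "d \<in> \<rho>" "al = pl d a" unfolding seg_shift_def by blast
    have alc: "al \<in> car" using d rho_car ac cl by blast
    obtain t where t: "t \<noteq> z" "v t = Some al" using v_surj[OF alc] by blast
    have "t \<notin> B x" using KB[OF x a] t al by blast
    then have "t \<notin> B y" using sub by blast
    then have "v t \<in> Some ` seg_shift G \<rho> b" using KB[OF y b] by blast
    then show "al \<in> seg_shift G \<rho> b" using t by auto
  qed
  define e where "e = pl a (gn b)"
  have ec: "e \<in> car" unfolding e_def using ac bc cl gn_car by blast
  have "seg_shift G \<rho> e = \<rho>"
  proof (rule set_eqI, rule iffI)
    fix al assume "al \<in> seg_shift G \<rho> e"
    then obtain d where d: "d \<in> \<rho>" "al = pl d e" unfolding seg_shift_def by blast
    have dc: "d \<in> car" using d rho_car by blast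
    have "pl d a \<in> seg_shift G \<rho> b" using sh d unfolding seg_shift_def by blast
    then obtain d' where d': "d' \<in> \<rho>" "pl d a = pl d' b" unfolding seg_shift_def by blast
    have d'c: "d' \<in> car" using d' rho_car by blast
    have "al = pl (pl d a) (gn b)" using d(2) dc ac bc gn_car ass unfolding e_def by simp
    also have "\<dots> = pl d' (pl b (gn b))" using d'(2) d'c bc gn_car ass by simp
    also have "\<dots> = d'" using bc gn_r d'c rz by simp
    finally show "al \<in> \<rho>" using d' by simp
  next
    fix d assume d: "d \<in> \<rho>"
    have dc: "d \<in> car" using d rho_car by blast
    define f where "f = pl b (gn a)"
    have fc: "f \<in> car" unfolding f_def using ac bc cl gn_car by blast
    have "le f ze" unfolding f_def using sub_le ac bc ba by blast
    then have "le (pl d f) d" using add_le dc fc by blast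
    then have dfr: "pl d f \<in> \<rho>" using rho_down d dc fc cl by blast
    have fe: "pl f e = ze"
    proof -
      have "pl f e = pl b (pl (pl (gn a) a) (gn b))" unfolding f_def e_def
        using ac bc gn_car cl ass by simp
      also have "\<dots> = ze" using ac bc gn_l gn_r gn_car lz by simp
      finally show ?thesis .
    qed
    have "pl (pl d f) e = d" using dc fc ec ass fe rz by simp
    then show "d \<in> seg_shift G \<rho> e" unfolding seg_shift_def using dfr by force
  qed
  then have "e \<in> ig G \<rho>" unfolding ig_def using ec by blast
  then have "pl a (gn b) = pl b (gn b)" using igv gn_r bc unfolding e_def by simp
  then have "a = b" using cancel ac bc gn_car by blast
  then show False using nab refl bc by blast
qed

end


context SHF begin

lemma kv_interp:
  assumes k: "krasner_valuation hadd mul z G v \<rho>" and i: "ig G \<rho> = {gzero G}"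
  shows "KV hadd mul z one G v \<rho>"
proof -
  have o: "ordered_ab_group G"
    using conjunct1[OF conjunct1[OF k[unfolded krasner_valuation_def, unfolded valuation_def]]] .
  show ?thesis
    by (intro KV.intro SHF_axioms OAG.intro KV_axioms.intro o k i)
qed

lemma KV_eq:
  assumes "KV hadd mul z one G v \<rho>" and x: "x \<noteq> z" and y: "y \<noteq> z"
  shows "v x = v y \<longleftrightarrow> B x = B y"
proof -
  interpret K: KV hadd mul z one G v \<rho> by (rule assms(1))
  obtain a where a: "a \<in> gcarrier G" "v x = Some a" using K.v_some[OF x] by blast
  obtain b where b: "b \<in> gcarrier G" "v y = Some b" using K.v_some[OF y] by blast
  show ?thesis
  proof
    assume "v x = v y"
    then have "a = b" using a b by simp
    then show "B x = B y" using K.U1[OF x y a(2) b(2)] K.U1[OF y x b(2) a(2)] K.refl a by blast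
  next
    assume e: "B x = B y"
    have "gle G a b" using K.U2[OF x y a(2) b(2)] e by blast
    moreover have "gle G b a" using K.U2[OF y x b(2) a(2)] e by blast
    ultimately have "a = b" using K.anti a b by blast
    then show "v x = v y" using a b by simp
  qed
qed

lemma uniq:
  assumes k1: "krasner_valuation hadd mul z G1 v1 \<rho>1" "ig G1 \<rho>1 = {gzero G1}"
    and k2: "krasner_valuation hadd mul z G2 v2 \<rho>2" "ig G2 \<rho>2 = {gzero G2}"
  shows "equivalent_valuations G1 v1 G2 v2"
proof -
  have KV1: "KV hadd mul z one G1 v1 \<rho>1" by (rule kv_interp[OF k1])
  have KV2: "KV hadd mul z one G2 v2 \<rho>2" by (rule kv_interp[OF k2])
  interpret K1: KV hadd mul z one G1 v1 \<rho>1 by (rule KV1)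
  interpret K2: KV hadd mul z one G2 v2 \<rho>2 by (rule KV2)
  have e12: "v1 x = v1 y \<longleftrightarrow> v2 x = v2 y" if "x \<noteq> z" "y \<noteq> z" for x y
    using KV_eq[OF KV1 that] KV_eq[OF KV2 that] by simp
  define \<sigma> where "\<sigma> a = the (v2 (SOME x. x \<noteq> z \<and> v1 x = Some a))" for a
  have sig: "\<sigma> (the (v1 x)) = the (v2 x)" if x: "x \<noteq> z" for x
  proof -
    obtain a where a: "v1 x = Some a" using K1.v_some[OF x] by blast
    have ex: "\<exists>x'. x' \<noteq> z \<and> v1 x' = Some a" using x a by blast
    define x' where "x' = (SOME x. x \<noteq> z \<and> v1 x = Some a)"
    have x': "x' \<noteq> z \<and> v1 x' = Some a" unfolding x'_def by (rule someI_ex[OF ex])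
    then have "v2 x' = v2 x" using e12[of x' x] x a by simp
    then show ?thesis unfolding \<sigma>_def using a x'_def by simp
  qed
  have rep1: "\<exists>x. x \<noteq> z \<and> a = the (v1 x)" if "a \<in> gcarrier G1" for a
    using K1.v_surj[OF that] by force
  have v1c: "the (v1 x) \<in> gcarrier G1" if "x \<noteq> z" for x
    using K1.v_some[OF that] by auto
  have v2c: "the (v2 x) \<in> gcarrier G2" if "x \<noteq> z" for x
    using K2.v_some[OF that] by auto
  show ?thesis unfolding equivalent_valuations_def
  proof (intro exI[of _ \<sigma>] conjI ballI impI allI)
    show "bij_betw \<sigma> (gcarrier G1) (gcarrier G2)"
      unfolding bij_betw_def
    proof
      show "inj_on \<sigma> (gcarrier G1)"
      proof (rule inj_onI)
        fix a b assume a: "a \<in> gcarrier G1" and b: "b \<in> gcarrier G1" and e: "\<sigma> a = \<sigma> b"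
        obtain x where x: "x \<noteq> z" "a = the (v1 x)" using rep1[OF a] by blast
        obtain y where y: "y \<noteq> z" "b = the (v1 y)" using rep1[OF b] by blast
        have "the (v2 x) = the (v2 y)" using e x y sig by simp
        then have "v2 x = v2 y" using K2.v_some[OF x(1)] K2.v_some[OF y(1)] by auto
        then have "v1 x = v1 y" using e12 x y by blast
        then show "a = b" using x y by simp
      qed
      show "\<sigma> ` gcarrier G1 = gcarrier G2"
      proof (rule set_eqI, rule iffI)
        fix c assume "c \<in> \<sigma> ` gcarrier G1"
        then obtain a where a: "a \<in> gcarrier G1" "c = \<sigma> a" by blast
        obtain x where x: "x \<noteq> z" "a = the (v1 x)" using rep1[OF a(1)] by blast
        show "c \<in> gcarrier G2" using a x sig v2c by simp
      next
        fix c assume c: "c \<in> gcarrier G2"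
        obtain x where x: "x \<noteq> z" "v2 x = Some c" using K2.v_surj[OF c] by blast
        have "\<sigma> (the (v1 x)) = c" using sig x by simp
        then show "c \<in> \<sigma> ` gcarrier G1" using v1c[OF x(1)] by blast
      qed
    qed
  next
    fix a b assume a: "a \<in> gcarrier G1" and b: "b \<in> gcarrier G1"
    obtain x where x: "x \<noteq> z" "v1 x = Some a" using K1.v_surj[OF a] by blast
    obtain y where y: "y \<noteq> z" "v1 y = Some b" using K1.v_surj[OF b] by blast
    have xy: "mul x y \<noteq> z" using nozd x y by blast
    have "v1 (mul x y) = Some (gplus G1 a b)" using K1.vmul[of x y] x y by (simp add: ext_plus_def)
    then have "\<sigma> (gplus G1 a b) = the (v2 (mul x y))" using sig[OF xy] by simp
    also have "\<dots> = gplus G2 (the (v2 x)) (the (v2 y))"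
      using K2.vmul[of x y] K2.v_some[OF x(1)] K2.v_some[OF y(1)] by (auto simp: ext_plus_def)
    also have "\<dots> = gplus G2 (\<sigma> a) (\<sigma> b)" using sig[OF x(1)] sig[OF y(1)] x(2) y(2) by simp
    finally show "\<sigma> (gplus G1 a b) = gplus G2 (\<sigma> a) (\<sigma> b)" .
    assume le: "gle G1 a b"
    have "B y \<subseteq> B x" by (rule K1.U1[OF x(1) y(1) x(2) y(2) le])
    obtain c where c: "v2 x = Some c" using K2.v_some[OF x(1)] by blast
    obtain d where d: "v2 y = Some d" using K2.v_some[OF y(1)] by blast
    have "gle G2 c d" by (rule K2.U2[OF x(1) y(1) c d \<open>B y \<subseteq> B x\<close>])
    moreover have "\<sigma> a = c" "\<sigma> b = d" using sig[OF x(1)] sig[OF y(1)] x(2) y(2) c d by auto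
    ultimately show "gle G2 (\<sigma> a) (\<sigma> b)" by simp
  next
    fix x
    show "v2 x = map_option \<sigma> (v1 x)"
    proof (cases "x = z")
      case True then show ?thesis using K1.vnone[of z] K2.vnone[of z] by simp
    next
      case False
      then show ?thesis using sig[OF False] K1.v_some[OF False] K2.v_some[OF False] by auto
    qed
  qed
qed

end

theorem corollary6p6:
  fixes hadd :: "'a \<Rightarrow> 'a \<Rightarrow> 'a set" and mul :: "'a \<Rightarrow> 'a \<Rightarrow> 'a" and z one :: 'a
  assumes "hyperfield hadd mul z one"
    and "superiorly_canonical hadd z"
  shows "(\<exists>(G :: 'a set ogroup) v \<rho>. krasner_valuation hadd mul z G v \<rho> \<and> ig G \<rho> = {gzero G})
       \<and> (\<forall>(G1 :: 'g ogroup) v1 \<rho>1 (G2 :: 'h ogroup) v2 \<rho>2.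
            krasner_valuation hadd mul z G1 v1 \<rho>1 \<and> ig G1 \<rho>1 = {gzero G1} \<and>
            krasner_valuation hadd mul z G2 v2 \<rho>2 \<and> ig G2 \<rho>2 = {gzero G2}
            \<longrightarrow> equivalent_valuations G1 v1 G2 v2)"
proof -
  interpret S: SHF hadd mul z one using assms by (rule SHF.intro)
  show ?thesis
  proof (intro conjI allI impI)
    have ig: "ig S.GG S.rho = {gzero S.GG}" using S.ig_rho by simp
    show "\<exists>(G :: 'a set ogroup) v \<rho>. krasner_valuation hadd mul z G v \<rho> \<and> ig G \<rho> = {gzero G}"
      by (intro exI[of _ S.GG] exI[of _ S.vv] exI[of _ S.rho] conjI S.krasner_vv ig)
    fix G1 :: "'g ogroup" and v1 \<rho>1 and G2 :: "'h ogroup" and v2 \<rho>2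
    assume h: "krasner_valuation hadd mul z G1 v1 \<rho>1 \<and> ig G1 \<rho>1 = {gzero G1} \<and>
            krasner_valuation hadd mul z G2 v2 \<rho>2 \<and> ig G2 \<rho>2 = {gzero G2}"
    show "equivalent_valuations G1 v1 G2 v2"
      using h by (intro S.uniq) (elim conjE; assumption)+
  qed
qed

end
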